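(* Let $n\ge2$ and let $Q$ be the $n\times n$ anti-comonotone checkerboard copula ($Q_{ij}=\frac1n$ if $i+j=n+1$, $Q_{ij}=0$ otherwise). For every $n\times n$ checkerboard copula $P\neq Q$, the function $\alpha\mapsto\tau(\alpha P+(1-\alpha)Q)$ is strictly increasing on $[0,1]$.
   Context: An $n\times n$ checkerboard copula is a real $n\times n$ matrix with nonnegative entries whose row and column sums all equal $\frac1n$. $\Xi=(\xi_{ij})$ with $\xi_{ij}=1$ if $i=j$, $2$ if $i>j$, $0$ if $i<j$. For an $n\times n$ matrix $M$, $\tau(M)=1-\mathrm{tr}(\Xi M\Xi M^\top)$ (Kendall's $\tau$ of a checkerboard copula). *)

theory Defs
  imports "HOL-Analysis.Analysis"
begin

text \<open>n x n real matrices are represented as functions nat => nat => real,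
  with row and column indices ranging over {1..n}; entries outside are irrelevant.\<close>

definition checkerboard_copula :: "nat \<Rightarrow> (nat \<Rightarrow> nat \<Rightarrow> real) \<Rightarrow> bool" where
  "checkerboard_copula n P \<longleftrightarrow>
     (\<forall>i\<in>{1..n}. \<forall>j\<in>{1..n}. 0 \<le> P i j) \<and>
     (\<forall>i\<in>{1..n}. (\<Sum>j=1..n. P i j) = 1 / real n) \<and>
     (\<forall>j\<in>{1..n}. (\<Sum>i=1..n. P i j) = 1 / real n)"

definition Xi :: "nat \<Rightarrow> nat \<Rightarrow> real" where
  "Xi i j = (if i = j then 1 else if i > j then 2 else 0)"

text \<open>tau(M) = 1 - tr(Xi M Xi M^T), with the trace and all products written out.\<close>
definition kendall_tau :: "nat \<Rightarrow> (nat \<Rightarrow> nat \<Rightarrow> real) \<Rightarrow> real" where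
  "kendall_tau n M = 1 - (\<Sum>i=1..n. \<Sum>j=1..n. \<Sum>k=1..n. \<Sum>l=1..n.
       Xi i j * M j k * Xi k l * M i l)"

definition anti_comonotone :: "nat \<Rightarrow> nat \<Rightarrow> nat \<Rightarrow> real" where
  "anti_comonotone n i j = (if i + j = n + 1 then 1 / real n else 0)"

end

theory Submission
  imports Defs
begin


definition rect :: "(nat \<Rightarrow> nat \<Rightarrow> real) \<Rightarrow> nat \<Rightarrow> nat \<Rightarrow> real" where
  "rect M a b = (\<Sum>i=1..a. \<Sum>l=1..b. M i l)"
definition tail :: "nat \<Rightarrow> (nat \<Rightarrow> nat \<Rightarrow> real) \<Rightarrow> nat \<Rightarrow> nat \<Rightarrow> real" where
  "tail n M a b = (\<Sum>i=a+1..n. \<Sum>l=b+1..n. M i l)"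
definition uu :: "nat \<Rightarrow> nat \<Rightarrow> real" where
  "uu i j = (if i \<le> j then 1 else 0) + (if i < j then 1 else 0)"

lemma Xi_sym: "Xi i j * Xi k l + Xi j i * Xi l k = 2 * (uu i j + uu l k - uu i j * uu l k)"
  by (cases i j rule: linorder_cases; cases k l rule: linorder_cases) (auto simp: Xi_def uu_def)

lemma split_sum: "(m::nat) \<le> n \<Longrightarrow> (\<Sum>x=1..n. f x) = (\<Sum>x=1..m. f x) + (\<Sum>x=m+1..n. (f x::real))"
proof -
  assume "m \<le> n"
  then have "{1..n} = {1..m} \<union> {m+1..n}" by auto
  then show ?thesis by (simp add: sum.union_disjoint)
qed

lemma restrict1: "(j::nat) \<le> n \<Longrightarrow> (\<Sum>i=1..n. (if i \<le> j then 1 else 0) * f i) = (\<Sum>i=1..j. (f i::real))"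
proof -
  assume j: "j \<le> n"
  have "(\<Sum>i=1..n. (if i \<le> j then 1 else 0) * f i) = (\<Sum>i=1..j. (if i \<le> j then 1 else 0) * f i) + (\<Sum>i=j+1..n. (if i \<le> j then 1 else 0) * f i)"
    using split_sum[OF j] by blast
  also have "(\<Sum>i=j+1..n. (if i \<le> j then 1 else 0) * f i) = 0" by (rule sum.neutral) auto
  also have "(\<Sum>i=1..j. (if i \<le> j then 1 else 0) * f i) = (\<Sum>i=1..j. f i)" by (rule sum.cong) auto
  finally show ?thesis by simp
qed

lemma restrict2: "(j::nat) \<le> n \<Longrightarrow> k \<le> n \<Longrightarrow>
  (\<Sum>i=1..n. \<Sum>l=1..n. (if i \<le> j then 1 else 0) * (if l \<le> k then 1 else 0) * g i l) = rect g j k"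
proof -
  assume j: "j \<le> n" and k: "k \<le> n"
  have "(\<Sum>i=1..n. \<Sum>l=1..n. (if i \<le> j then 1 else 0) * (if l \<le> k then 1 else 0) * g i l)
      = (\<Sum>i=1..n. (if i \<le> j then 1 else 0) * (\<Sum>l=1..n. (if l \<le> k then 1 else 0) * g i l))"
    by (simp add: sum_distrib_left mult.assoc)
  also have "\<dots> = (\<Sum>i=1..n. (if i \<le> j then 1 else 0) * (\<Sum>l=1..k. g i l))"
    using restrict1[OF k] by simp
  also have "\<dots> = rect g j k" unfolding rect_def using restrict1[OF j] by simp
  finally show ?thesis .
qed

lemma E_rect:
  assumes "1 \<le> j" "j \<le> n" "1 \<le> k" "k \<le> n"
  shows "(\<Sum>i=1..n. \<Sum>l=1..n. uu i j * uu l k * D i l)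
    = rect D j k + rect D j (k-1) + rect D (j-1) k + rect D (j-1) (k-1)"
proof -
  have u: "uu i m = (if i \<le> m then 1 else 0) + (if i \<le> m - 1 then 1 else 0)" if "1 \<le> m" for i m
    using that by (auto simp: uu_def)
  have "(\<Sum>i=1..n. \<Sum>l=1..n. uu i j * uu l k * D i l)
    = (\<Sum>i=1..n. \<Sum>l=1..n. (if i \<le> j then 1 else 0) * (if l \<le> k then 1 else 0) * D i l
       + (if i \<le> j then 1 else 0) * (if l \<le> k - 1 then 1 else 0) * D i l
       + (if i \<le> j - 1 then 1 else 0) * (if l \<le> k then 1 else 0) * D i l
       + (if i \<le> j - 1 then 1 else 0) * (if l \<le> k - 1 then 1 else 0) * D i l)"
    by (rule sum.cong[OF refl], rule sum.cong[OF refl], simp only: u[OF assms(1)] u[OF assms(3)], simp add: algebra_simps)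
  also have "\<dots> = rect D j k + rect D j (k-1) + rect D (j-1) k + rect D (j-1) (k-1)"
    using restrict2[of j n k D] restrict2[of j n "k-1" D] restrict2[of "j-1" n k D] restrict2[of "j-1" n "k-1" D] assms
    by (simp only: sum.distrib)
  finally show ?thesis .
qed

lemma swapA: "(\<Sum>i\<in>A. \<Sum>j\<in>A. \<Sum>k\<in>A. \<Sum>l\<in>A. (F i j k l::real)) = (\<Sum>j\<in>A. \<Sum>k\<in>A. \<Sum>i\<in>A. \<Sum>l\<in>A. F i j k l)"
proof -
  have "(\<Sum>i\<in>A. \<Sum>j\<in>A. \<Sum>k\<in>A. \<Sum>l\<in>A. F i j k l) = (\<Sum>j\<in>A. \<Sum>i\<in>A. \<Sum>k\<in>A. \<Sum>l\<in>A. F i j k l)"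
    by (rule sum.swap)
  also have "\<dots> = (\<Sum>j\<in>A. \<Sum>k\<in>A. \<Sum>i\<in>A. \<Sum>l\<in>A. F i j k l)"
    by (rule sum.cong[OF refl], rule sum.swap)
  finally show ?thesis .
qed

lemma swapB: "(\<Sum>j\<in>A. \<Sum>i\<in>A. \<Sum>l\<in>A. \<Sum>k\<in>A. (F i j k l::real)) = (\<Sum>j\<in>A. \<Sum>k\<in>A. \<Sum>i\<in>A. \<Sum>l\<in>A. F i j k l)"
proof -
  have "(\<Sum>j\<in>A. \<Sum>i\<in>A. \<Sum>l\<in>A. \<Sum>k\<in>A. F i j k l) = (\<Sum>j\<in>A. \<Sum>i\<in>A. \<Sum>k\<in>A. \<Sum>l\<in>A. F i j k l)"
    by (rule sum.cong[OF refl], rule sum.cong[OF refl], rule sum.swap)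
  also have "\<dots> = (\<Sum>j\<in>A. \<Sum>k\<in>A. \<Sum>i\<in>A. \<Sum>l\<in>A. F i j k l)"
    by (rule sum.cong[OF refl], rule sum.swap)
  finally show ?thesis .
qed



lemma S_ident:
  fixes M D :: "nat \<Rightarrow> nat \<Rightarrow> real"
  assumes rowD: "\<forall>i\<in>{1..n}. (\<Sum>l=1..n. D i l) = 0"
    and colD: "\<forall>l\<in>{1..n}. (\<Sum>i=1..n. D i l) = 0"
  shows "(\<Sum>i=1..n. \<Sum>j=1..n. \<Sum>k=1..n. \<Sum>l=1..n. Xi i j * Xi k l * (M j k * D i l + M i l * D j k))
    = -2 * (\<Sum>j=1..n. \<Sum>k=1..n. M j k * (\<Sum>i=1..n. \<Sum>l=1..n. uu i j * uu l k * D i l))"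
proof -
  have "(\<Sum>i=1..n. \<Sum>j=1..n. \<Sum>k=1..n. \<Sum>l=1..n. Xi i j * Xi k l * (M j k * D i l + M i l * D j k))
    = (\<Sum>i=1..n. \<Sum>j=1..n. \<Sum>k=1..n. \<Sum>l=1..n. Xi i j * Xi k l * M j k * D i l)
    + (\<Sum>i=1..n. \<Sum>j=1..n. \<Sum>k=1..n. \<Sum>l=1..n. Xi i j * Xi k l * M i l * D j k)"
    by (simp add: sum.distrib distrib_left mult.assoc)
  also have "(\<Sum>i=1..n. \<Sum>j=1..n. \<Sum>k=1..n. \<Sum>l=1..n. Xi i j * Xi k l * M j k * D i l)
     = (\<Sum>j=1..n. \<Sum>k=1..n. \<Sum>i=1..n. \<Sum>l=1..n. Xi i j * Xi k l * M j k * D i l)"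
    by (rule swapA)
  also have "(\<Sum>i=1..n. \<Sum>j=1..n. \<Sum>k=1..n. \<Sum>l=1..n. Xi i j * Xi k l * M i l * D j k)
     = (\<Sum>j=1..n. \<Sum>k=1..n. \<Sum>i=1..n. \<Sum>l=1..n. Xi j i * Xi l k * M j k * D i l)"
    by (rule swapB)
  also have "(\<Sum>j=1..n. \<Sum>k=1..n. \<Sum>i=1..n. \<Sum>l=1..n. Xi i j * Xi k l * M j k * D i l)
     + (\<Sum>j=1..n. \<Sum>k=1..n. \<Sum>i=1..n. \<Sum>l=1..n. Xi j i * Xi l k * M j k * D i l)
     = (\<Sum>j=1..n. \<Sum>k=1..n. \<Sum>i=1..n. \<Sum>l=1..n. (Xi i j * Xi k l + Xi j i * Xi l k) * M j k * D i l)"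
    by (simp add: sum.distrib distrib_right)
  also have "\<dots> = (\<Sum>j=1..n. \<Sum>k=1..n. \<Sum>i=1..n. \<Sum>l=1..n.
        2 * M j k * (uu i j * D i l) + 2 * M j k * (uu l k * D i l) - 2 * M j k * (uu i j * uu l k * D i l))"
    by (simp only: Xi_sym, simp add: algebra_simps)
  also have "\<dots> = (\<Sum>j=1..n. \<Sum>k=1..n. 2 * M j k * (\<Sum>i=1..n. \<Sum>l=1..n. uu i j * D i l)
        + 2 * M j k * (\<Sum>i=1..n. \<Sum>l=1..n. uu l k * D i l)
        - 2 * M j k * (\<Sum>i=1..n. \<Sum>l=1..n. uu i j * uu l k * D i l))"
    by (simp add: sum.distrib sum_subtractf sum_distrib_left)
  also have "\<dots> = (\<Sum>j=1..n. \<Sum>k=1..n. - 2 * (M j k * (\<Sum>i=1..n. \<Sum>l=1..n. uu i j * uu l k * D i l)))"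
  proof (intro sum.cong refl)
    fix j k
    have z1: "(\<Sum>i=1..n. \<Sum>l=1..n. uu i j * D i l) = 0"
      using rowD by (simp add: sum_distrib_left[symmetric])
    have "(\<Sum>i=1..n. \<Sum>l=1..n. uu l k * D i l) = (\<Sum>l=1..n. \<Sum>i=1..n. uu l k * D i l)"
      by (rule sum.swap)
    also have "\<dots> = 0" using colD by (simp add: sum_distrib_left[symmetric])
    finally show "2 * M j k * (\<Sum>i=1..n. \<Sum>l=1..n. uu i j * D i l)
        + 2 * M j k * (\<Sum>i=1..n. \<Sum>l=1..n. uu l k * D i l)
        - 2 * M j k * (\<Sum>i=1..n. \<Sum>l=1..n. uu i j * uu l k * D i l)
      = - 2 * (M j k * (\<Sum>i=1..n. \<Sum>l=1..n. uu i j * uu l k * D i l))"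
      using z1 by simp
  qed
  also have "\<dots> = -2 * (\<Sum>j=1..n. \<Sum>k=1..n. M j k * (\<Sum>i=1..n. \<Sum>l=1..n. uu i j * uu l k * D i l))"
    by (simp add: sum_distrib_left)
  finally show ?thesis .
qed

lemma diff_ident:
  fixes Q D :: "nat \<Rightarrow> nat \<Rightarrow> real"
  shows "kendall_tau n (\<lambda>i j. Q i j + y * D i j) - kendall_tau n (\<lambda>i j. Q i j + x * D i j)
    = -(y-x) * (\<Sum>i=1..n. \<Sum>j=1..n. \<Sum>k=1..n. \<Sum>l=1..n. Xi i j * Xi k l *
        ((Q j k + (x+y)/2 * D j k) * D i l + (Q i l + (x+y)/2 * D i l) * D j k))"
proof -
  have "kendall_tau n (\<lambda>i j. Q i j + y * D i j) - kendall_tau n (\<lambda>i j. Q i j + x * D i j)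
    = (\<Sum>i=1..n. \<Sum>j=1..n. \<Sum>k=1..n. \<Sum>l=1..n.
        Xi i j * (Q j k + x * D j k) * Xi k l * (Q i l + x * D i l)
      - Xi i j * (Q j k + y * D j k) * Xi k l * (Q i l + y * D i l))"
    unfolding kendall_tau_def by (simp add: sum_subtractf)
  also have "\<dots> = (\<Sum>i=1..n. \<Sum>j=1..n. \<Sum>k=1..n. \<Sum>l=1..n. -(y-x) * (Xi i j * Xi k l *
        ((Q j k + (x+y)/2 * D j k) * D i l + (Q i l + (x+y)/2 * D i l) * D j k)))"
    by (intro sum.cong refl) (simp add: field_simps)
  also have "\<dots> = -(y-x) * (\<Sum>i=1..n. \<Sum>j=1..n. \<Sum>k=1..n. \<Sum>l=1..n. Xi i j * Xi k l *
        ((Q j k + (x+y)/2 * D j k) * D i l + (Q i l + (x+y)/2 * D i l) * D j k))"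
    by (simp add: sum_distrib_left)
  finally show ?thesis .
qed



lemma Q_row: "i \<in> {1..n} \<Longrightarrow> (\<Sum>j=1..n. anti_comonotone n i j) = 1 / real n"
proof -
  assume i: "i \<in> {1..n}"
  have "(\<Sum>j=1..n. anti_comonotone n i j) = (\<Sum>j=1..n. if j = n + 1 - i then 1 / real n else 0)"
    by (rule sum.cong) (use i in \<open>auto simp: anti_comonotone_def\<close>)
  also have "\<dots> = 1 / real n" using i by (subst sum.delta) auto
  finally show ?thesis .
qed

lemma Q_col: "j \<in> {1..n} \<Longrightarrow> (\<Sum>i=1..n. anti_comonotone n i j) = 1 / real n"
proof -
  assume j: "j \<in> {1..n}"
  have "(\<Sum>i=1..n. anti_comonotone n i j) = (\<Sum>i=1..n. if i = n + 1 - j then 1 / real n else 0)"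
    by (rule sum.cong) (use j in \<open>auto simp: anti_comonotone_def\<close>)
  also have "\<dots> = 1 / real n" using j by (subst sum.delta) auto
  finally show ?thesis .
qed

lemma Q_cop: "checkerboard_copula n (anti_comonotone n)"
  unfolding checkerboard_copula_def using Q_row Q_col by (auto simp: anti_comonotone_def)

lemma complement:
  assumes cop: "checkerboard_copula n M" and i: "i \<le> n" and l: "l \<le> n"
  shows "rect M i l = (real i + real l - real n) / real n + tail n M i l"
proof -
  have rows: "(\<Sum>a=1..n. M r a) = 1 / real n" if "r \<in> {1..n}" for r
    using cop that unfolding checkerboard_copula_def by blast
  have cols: "(\<Sum>a=1..n. M a c) = 1 / real n" if "c \<in> {1..n}" for c
    using cop that unfolding checkerboard_copula_def by blast
  define X where "X = (\<Sum>a=1..i. \<Sum>b=l+1..n. M a b)"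
  have "real i / real n = (\<Sum>a=1..i. \<Sum>b=1..n. M a b)"
    using rows i by simp
  also have "\<dots> = rect M i l + X"
    unfolding rect_def X_def using split_sum[OF l] by (simp add: sum.distrib)
  finally have e1: "real i / real n = rect M i l + X" .
  have "(real n - real l) / real n = (\<Sum>b=l+1..n. \<Sum>a=1..n. M a b)"
    using cols l by (simp add: of_nat_diff)
  also have "\<dots> = (\<Sum>a=1..n. \<Sum>b=l+1..n. M a b)" by (rule sum.swap)
  also have "\<dots> = X + tail n M i l"
    unfolding tail_def X_def using split_sum[OF i] by blast
  finally have e2: "(real n - real l) / real n = X + tail n M i l" .
  have "(real i + real l - real n) / real n = real i / real n - (real n - real l) / real n"
    by (simp add: diff_divide_distrib add_divide_distrib)
  then show ?thesis using e1 e2 by simp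
qed

lemma rectQ0: "i + l \<le> n \<Longrightarrow> rect (anti_comonotone n) i l = 0"
  unfolding rect_def by (intro sum.neutral ballI) (auto simp: anti_comonotone_def)

lemma tailQ0: "n \<le> i + l \<Longrightarrow> tail n (anti_comonotone n) i l = 0"
  unfolding tail_def by (intro sum.neutral ballI) (auto simp: anti_comonotone_def)

lemma rect_nonneg:
  assumes "checkerboard_copula n M" "i \<le> n" "l \<le> n"
  shows "rect M i l \<ge> 0"
  unfolding rect_def using assms unfolding checkerboard_copula_def
  by (intro sum_nonneg) auto

lemma tail_nonneg:
  assumes "checkerboard_copula n M"
  shows "tail n M i l \<ge> 0"
  unfolding tail_def using assms unfolding checkerboard_copula_def
  by (intro sum_nonneg) auto

lemma rect_diff: "rect (\<lambda>i j. P i j - Q i j) a b = rect P a b - rect Q a b"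
  unfolding rect_def by (simp add: sum_subtractf)

lemma rectD_nonneg:
  assumes cop: "checkerboard_copula n P" and i: "i \<le> n" and l: "l \<le> n"
  shows "rect (\<lambda>a b. P a b - anti_comonotone n a b) i l \<ge> 0"
proof (cases "i + l \<le> n")
  case True
  then show ?thesis using rect_nonneg[OF cop i l] rectQ0[OF True] by (simp add: rect_diff)
next
  case False
  then show ?thesis
    using complement[OF cop i l] complement[OF Q_cop i l] tailQ0[of n i l] tail_nonneg[OF cop, of i l]
    by (simp add: rect_diff)
qed

lemma rect_ge_entry:
  assumes cop: "checkerboard_copula n M" and "i \<le> n" "l \<le> n" "a \<in> {1..i}" "b \<in> {1..l}"
  shows "M a b \<le> rect M i l"
proof -
  have nn: "\<And>x y. x \<in> {1..n} \<Longrightarrow> y \<in> {1..n} \<Longrightarrow> 0 \<le> M x y"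
    using cop unfolding checkerboard_copula_def by blast
  have "M a b \<le> (\<Sum>y=1..l. M a y)"
    by (rule member_le_sum) (use assms nn in auto)
  also have "\<dots> \<le> (\<Sum>x=1..i. \<Sum>y=1..l. M x y)"
    by (rule member_le_sum[where f = "\<lambda>x. \<Sum>y=1..l. M x y"]) (use assms nn in \<open>auto intro!: sum_nonneg\<close>)
  finally show ?thesis unfolding rect_def .
qed

lemma tail_ge_entry:
  assumes cop: "checkerboard_copula n M" and "a \<in> {i+1..n}" "b \<in> {l+1..n}"
  shows "M a b \<le> tail n M i l"
proof -
  have nn: "\<And>x y. x \<in> {1..n} \<Longrightarrow> y \<in> {1..n} \<Longrightarrow> 0 \<le> M x y"
    using cop unfolding checkerboard_copula_def by blast
  have "M a b \<le> (\<Sum>y=l+1..n. M a y)"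
    by (rule member_le_sum) (use assms nn in auto)
  also have "\<dots> \<le> (\<Sum>x=i+1..n. \<Sum>y=l+1..n. M x y)"
    by (rule member_le_sum[where f = "\<lambda>x. \<Sum>y=l+1..n. M x y"]) (use assms nn in \<open>auto intro!: sum_nonneg\<close>)
  finally show ?thesis unfolding tail_def .
qed

lemma strict_pos:
  assumes n: "n \<ge> 2" and cop: "checkerboard_copula n P"
    and ne: "\<exists>i\<in>{1..n}. \<exists>j\<in>{1..n}. P i j \<noteq> anti_comonotone n i j"
  shows "\<exists>j0\<in>{1..n-1}. rect (\<lambda>a b. P a b - anti_comonotone n a b) j0 (n - j0) > 0"
proof -
  have nn: "\<And>x y. x \<in> {1..n} \<Longrightarrow> y \<in> {1..n} \<Longrightarrow> 0 \<le> P x y"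
    using cop unfolding checkerboard_copula_def by blast
  have rows: "(\<Sum>a=1..n. P r a) = 1 / real n" if "r \<in> {1..n}" for r
    using cop that unfolding checkerboard_copula_def by blast
  have "\<exists>a\<in>{1..n}. \<exists>b\<in>{1..n}. a + b \<noteq> n + 1 \<and> P a b > 0"
  proof -
    obtain a b where ab: "a \<in> {1..n}" "b \<in> {1..n}" "P a b \<noteq> anti_comonotone n a b" using ne by blast
    show ?thesis
    proof (cases "a + b = n + 1")
      case False
      then have "P a b > 0" using ab nn[of a b] by (auto simp: anti_comonotone_def)
      then show ?thesis using ab False by blast
    next
      case True
      then have pne: "P a b \<noteq> 1 / real n" using ab by (simp add: anti_comonotone_def)
      show ?thesis
      proof (rule ccontr)
        assume "\<not> ?thesis"
        then have z: "\<forall>c\<in>{1..n} - {b}. P a c = 0"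
          using ab nn True by (metis DiffE add_left_cancel insertI1 order_less_le)
        have "(\<Sum>c=1..n. P a c) = P a b + (\<Sum>c\<in>{1..n} - {b}. P a c)"
          using ab sum.remove[of "{1..n}" b "P a"] by simp
        also have "\<dots> = P a b" using z by simp
        finally show False using rows[OF ab(1)] pne by simp
      qed
    qed
  qed
  then obtain a b where ab: "a \<in> {1..n}" "b \<in> {1..n}" "a + b \<noteq> n + 1" "P a b > 0" by blast
  define j0 where "j0 = (if a + b \<le> n then a else a - 1)"
  have j0: "j0 \<in> {1..n-1}" using ab unfolding j0_def by auto
  have Q0: "rect (anti_comonotone n) j0 (n - j0) = 0" by (rule rectQ0) (use j0 in auto)
  have "P a b \<le> rect P j0 (n - j0)"
  proof (cases "a + b \<le> n")
    case True
    then show ?thesis using ab j0 by (intro rect_ge_entry[OF cop]) (auto simp: j0_def)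
  next
    case False
    have "P a b \<le> tail n P j0 (n - j0)"
      using ab False by (intro tail_ge_entry[OF cop]) (auto simp: j0_def)
    also have "\<dots> = rect P j0 (n - j0)"
      using complement[OF cop, of j0 "n - j0"] j0 by (simp add: of_nat_diff, linarith)
    finally show ?thesis .
  qed
  then have "rect (\<lambda>a b. P a b - anti_comonotone n a b) j0 (n - j0) > 0"
    using Q0 ab(4) by (simp add: rect_diff)
  then show ?thesis using j0 by blast
qed



theorem lemma10:
  fixes n :: nat and P :: "nat \<Rightarrow> nat \<Rightarrow> real"
  assumes "n \<ge> 2"
    and "checkerboard_copula n P"
    and "\<exists>i\<in>{1..n}. \<exists>j\<in>{1..n}. P i j \<noteq> anti_comonotone n i j"
  shows "strict_mono_on {0..1::real}
           (\<lambda>\<alpha>. kendall_tau n (\<lambda>i j. \<alpha> * P i j + (1 - \<alpha>) * anti_comonotone n i j))"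
proof -
  define Q where "Q = anti_comonotone n"
  define D where "D = (\<lambda>i j. P i j - Q i j)"
  define E where "E = (\<lambda>j k. \<Sum>i=1..n. \<Sum>l=1..n. uu i j * uu l k * D i l)"
  have cop: "checkerboard_copula n P" by fact
  have nnP: "\<And>x y. x \<in> {1..n} \<Longrightarrow> y \<in> {1..n} \<Longrightarrow> 0 \<le> P x y"
    using cop unfolding checkerboard_copula_def by blast
  have rowP: "\<And>r. r \<in> {1..n} \<Longrightarrow> (\<Sum>a=1..n. P r a) = 1 / real n"
    using cop unfolding checkerboard_copula_def by blast
  have colP: "\<And>r. r \<in> {1..n} \<Longrightarrow> (\<Sum>a=1..n. P a r) = 1 / real n"
    using cop unfolding checkerboard_copula_def by blast
  have rowD: "\<forall>i\<in>{1..n}. (\<Sum>l=1..n. D i l) = 0"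
    using rowP Q_row unfolding D_def Q_def by (simp add: sum_subtractf)
  have colD: "\<forall>l\<in>{1..n}. (\<Sum>i=1..n. D i l) = 0"
    using colP Q_col unfolding D_def Q_def by (simp add: sum_subtractf)
  have Erect: "E j k = rect D j k + rect D j (k-1) + rect D (j-1) k + rect D (j-1) (k-1)"
    if "j \<in> {1..n}" "k \<in> {1..n}" for j k
    unfolding E_def using E_rect[of j n k D] that by auto
  have rD: "rect D i l \<ge> 0" if "i \<le> n" "l \<le> n" for i l
    using rectD_nonneg[OF cop that] unfolding D_def Q_def .
  have Enn: "E j k \<ge> 0" if "j \<in> {1..n}" "k \<in> {1..n}" for j k
    using Erect[OF that] rD[of j k] rD[of j "k-1"] rD[of "j-1" k] rD[of "j-1" "k-1"] that by auto
  obtain j0 where j0: "j0 \<in> {1..n-1}" and rpos: "rect D j0 (n - j0) > 0"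
    using strict_pos[OF assms] unfolding D_def Q_def by blast
  define k0 where "k0 = n + 1 - j0"
  have j0n: "j0 \<in> {1..n}" and k0n: "k0 \<in> {1..n}" using j0 unfolding k0_def by auto
  have j0le: "j0 - 1 \<le> n" using j0 by auto
  have Epos: "E j0 k0 > 0"
    using j0le Erect[OF j0n k0n] rD[of j0 "k0-1"] rD[of j0 k0] rD[of "j0-1" k0] rD[of "j0-1" "k0-1"] j0n k0n rpos
    unfolding k0_def by auto
  have Qk0: "Q j0 k0 = 1 / real n" unfolding Q_def anti_comonotone_def k0_def using j0 by auto
  have npos: "real n > 0" using assms(1) by simp
  define f where "f = (\<lambda>\<alpha>. kendall_tau n (\<lambda>i j. \<alpha> * P i j + (1 - \<alpha>) * anti_comonotone n i j))"
  have f_eq: "f t = kendall_tau n (\<lambda>i j. Q i j + t * D i j)" for t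
    unfolding f_def Q_def D_def by (rule arg_cong[where f = "kendall_tau n"]) (auto simp: algebra_simps)
  show ?thesis
    unfolding f_def[symmetric] strict_mono_on_def
  proof (intro allI impI)
    fix x y :: real
    assume "x \<in> {0..1} \<and> y \<in> {0..1} \<and> x < y"
    then have x: "0 \<le> x" and y: "y \<le> 1" and xy: "x < y" by auto
    define s where "s = (x + y) / 2"
    have s0: "0 \<le> s" and s1: "s < 1" using x y xy unfolding s_def by auto
    define M where "M = (\<lambda>j k. Q j k + s * D j k)"
    have diff: "f y - f x = -(y - x) * (-2 * (\<Sum>j=1..n. \<Sum>k=1..n. M j k * E j k))"
      unfolding f_eq diff_ident M_def E_def s_def
      using S_ident[OF rowD colD, of "\<lambda>j k. Q j k + (x + y) / 2 * D j k"] by simp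
    have Mnn: "M j k \<ge> 0" if "j \<in> {1..n}" "k \<in> {1..n}" for j k
    proof -
      have "M j k = (1 - s) * Q j k + s * P j k" unfolding M_def D_def by (simp add: algebra_simps)
      moreover have "Q j k \<ge> 0" unfolding Q_def anti_comonotone_def by simp
      ultimately show ?thesis using nnP[OF that] s0 s1 by simp
    qed
    have Mk0: "M j0 k0 \<ge> (1 - s) / real n"
    proof -
      have "M j0 k0 = (1 - s) * Q j0 k0 + s * P j0 k0" unfolding M_def D_def by (simp add: algebra_simps)
      then show ?thesis using Qk0 nnP[OF j0n k0n] s0 by simp
    qed
    have "0 < M j0 k0 * E j0 k0"
      using Mk0 Epos s1 npos by (metis diff_gt_0_iff_gt divide_pos_pos mult_pos_pos order_less_le_trans)
    also have "M j0 k0 * E j0 k0 \<le> (\<Sum>k=1..n. M j0 k * E j0 k)"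
      by (rule member_le_sum[where f = "\<lambda>k. M j0 k * E j0 k"]) (use k0n j0n Mnn Enn in auto)
    also have "\<dots> \<le> (\<Sum>j=1..n. \<Sum>k=1..n. M j k * E j k)"
      by (rule member_le_sum[where f = "\<lambda>j. \<Sum>k=1..n. M j k * E j k"])
         (use j0n Mnn Enn in \<open>auto intro!: sum_nonneg\<close>)
    finally have "0 < (\<Sum>j=1..n. \<Sum>k=1..n. M j k * E j k)" .
    then have "f y - f x > 0" unfolding diff using xy by (simp add: mult_neg_pos)
    then show "f x < f y" by simp
  qed
qed


end
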